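(* Let $Q$ be a probability measure on $\mathcal Z$ and $P_1,P_2\ll Q$ probability measures with densities $\rho_j=\frac{\mathrm dP_j}{\mathrm dQ}$ such that, for some $\varepsilon\ge0$, $\delta\ge0$, $$\int\max\{\rho_1-e^{\varepsilon}\rho_2,0\}\,\mathrm dQ\le\delta\quad\text{and}\quad\int\max\{\rho_2-e^{\varepsilon}\rho_1,0\}\,\mathrm dQ\le\delta.$$ Then there exists a probability measure $P_3\ll Q$ such that $d_{\mathrm{TV}}(P_1,P_3)\le\delta$ and $e^{-\varepsilon}\frac{\mathrm dP_2}{\mathrm dQ}(z)\le\frac{\mathrm dP_3}{\mathrm dQ}(z)\le e^{\varepsilon}\frac{\mathrm dP_2}{\mathrm dQ}(z)$ for $Q$-almost every $z$.
   Context: $d_{\mathrm{TV}}(P,P')=\sup_S|P(S)-P'(S)|=\int\max\{\frac{\mathrm dP}{\mathrm dQ}-\frac{\mathrm dP'}{\mathrm dQ},0\}\,\mathrm dQ$. *)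

theory Defs
  imports "HOL-Probability.Probability"
begin

definition tv_dist :: "'a measure \<Rightarrow> 'a measure \<Rightarrow> real" where
  "tv_dist P P' = (SUP S \<in> sets P. \<bar>measure P S - measure P' S\<bar>)"

end

theory Submission
  imports Defs
begin

lemma core:
  fixes M :: "'a measure" and r1 r2 :: "'a \<Rightarrow> real" and E \<delta> :: real
  assumes E: "E \<ge> 1"
    and i1: "integrable M r1" and i2: "integrable M r2"
    and n1: "\<And>z. r1 z \<ge> 0" and n2: "\<And>z. r2 z \<ge> 0"
    and m1: "integral\<^sup>L M r1 = 1" and m2: "integral\<^sup>L M r2 = 1"
    and hA: "(\<integral>z. max (r1 z - E * r2 z) 0 \<partial>M) \<le> \<delta>"
    and hB: "(\<integral>z. max (r2 z - E * r1 z) 0 \<partial>M) \<le> \<delta>"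
  shows "\<exists>g. integrable M g \<and> integral\<^sup>L M g = 1 \<and>
     (\<forall>z. r2 z / E \<le> g z \<and> g z \<le> E * r2 z) \<and>
     (\<integral>z. max (r1 z - g z) 0 \<partial>M) \<le> \<delta> \<and> (\<integral>z. max (g z - r1 z) 0 \<partial>M) \<le> \<delta>"
proof -
  define c where "c z = min (max (r1 z) (r2 z / E)) (E * r2 z)" for z
  have Epos: "E > 0" using E by simp
  have ic: "integrable M c" unfolding c_def using i1 i2 by auto
  define m where "m = integral\<^sup>L M c"
  have cle: "c z \<le> E * r2 z" for z unfolding c_def by simp
  have cge: "r2 z / E \<le> c z" for z
  proof -
    have a1: "r2 z / E \<le> r2 z" using E n2[of z] mult_left_mono[of 1 E "r2 z"] by (simp add: divide_le_eq)
    have a2: "1 * r2 z \<le> E * r2 z" using E n2[of z] by (intro mult_right_mono) auto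
    have "r2 z / E \<le> E * r2 z" using a1 a2 by simp
    then show ?thesis unfolding c_def by simp
  qed
  have mE: "m \<le> E" unfolding m_def
  proof -
    have "integral\<^sup>L M c \<le> integral\<^sup>L M (\<lambda>z. E * r2 z)"
      using ic i2 cle by (intro integral_mono) auto
    then show "integral\<^sup>L M c \<le> E" using m2 by simp
  qed
  have mE': "1 / E \<le> m" unfolding m_def
  proof -
    have "integral\<^sup>L M (\<lambda>z. r2 z / E) \<le> integral\<^sup>L M c"
      using ic i2 cge by (intro integral_mono) auto
    then show "1 / E \<le> integral\<^sup>L M c" using m2 by simp
  qed
  have Einv: "1 / E \<le> 1" using E by simp
  have key: "\<exists>g. integrable M g \<and> integral\<^sup>L M g = 1 \<and>
     (\<forall>z. r2 z / E \<le> g z \<and> g z \<le> E * r2 z) \<and>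
     ((\<integral>z. max (r1 z - g z) 0 \<partial>M) \<le> \<delta> \<or> (\<integral>z. max (g z - r1 z) 0 \<partial>M) \<le> \<delta>)"
  proof (cases "m \<le> 1")
    case True
    define t where "t = (if E = m then 0 else (1 - m) / (E - m))"
    have t0: "0 \<le> t" and t1: "t \<le> 1" using True mE E unfolding t_def by (auto simp: field_simps)
    have tm: "m + t * (E - m) = 1" using True mE E unfolding t_def by (auto simp: field_simps)
    define g where "g z = c z + t * (E * r2 z - c z)" for z
    have ig: "integrable M g" unfolding g_def using ic i2 by auto
    have "integral\<^sup>L M g = m + t * (E - m)"
      unfolding g_def m_def using ic i2 m2 by (simp add: integral_add integral_diff)
    with tm have g1: "integral\<^sup>L M g = 1" by simp
    have gb: "r2 z / E \<le> g z \<and> g z \<le> E * r2 z" for z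
    proof -
      have b1: "0 \<le> t * (E * r2 z - c z)" using cle[of z] t0 by simp
      have b2: "t * (E * r2 z - c z) \<le> E * r2 z - c z"
        using cle[of z] t0 t1 by (intro mult_left_le_one_le) auto
      show ?thesis using b1 b2 cge[of z] unfolding g_def by linarith
    qed
    have gge: "max (r1 z - g z) 0 \<le> max (r1 z - E * r2 z) 0" for z
    proof -
      have "c z \<le> g z" using cle[of z] t0 unfolding g_def by simp
      moreover have "min (r1 z) (E * r2 z) \<le> c z" unfolding c_def by simp
      ultimately show ?thesis by linarith
    qed
    have "(\<integral>z. max (r1 z - g z) 0 \<partial>M) \<le> (\<integral>z. max (r1 z - E * r2 z) 0 \<partial>M)"
      using ig i1 i2 gge by (intro integral_mono) auto
    with hA ig g1 gb show ?thesis by (intro exI[of _ g]) auto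
  next
    case False
    define t where "t = (m - 1) / (m - 1 / E)"
    have t0: "0 \<le> t" and t1: "t \<le> 1" using False Einv unfolding t_def by (auto simp: field_simps)
    have pos: "m - 1 / E \<noteq> 0" using False Einv by linarith
    have "t * (m - 1 / E) = m - 1" using pos unfolding t_def by simp
    then have tm: "m - t * (m - 1 / E) = 1" by simp
    define g where "g z = c z - t * (c z - r2 z / E)" for z
    have ig: "integrable M g" unfolding g_def using ic i2 by auto
    have "integral\<^sup>L M g = m - t * (m - 1 / E)"
      unfolding g_def m_def using ic i2 m2 by (simp add: integral_diff)
    with tm have g1: "integral\<^sup>L M g = 1" by simp
    have gb: "r2 z / E \<le> g z \<and> g z \<le> E * r2 z" for z
    proof -
      have b1: "0 \<le> t * (c z - r2 z / E)" using cge[of z] t0 by simp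
      have b2: "t * (c z - r2 z / E) \<le> c z - r2 z / E"
        using cge[of z] t0 t1 by (intro mult_left_le_one_le) auto
      show ?thesis using b1 b2 cle[of z] unfolding g_def by linarith
    qed
    have gge: "max (g z - r1 z) 0 \<le> max (r2 z - E * r1 z) 0" for z
    proof -
      have "g z \<le> c z" using cge[of z] t0 unfolding g_def by simp
      moreover have "c z \<le> max (r1 z) (r2 z / E)" unfolding c_def by simp
      moreover have "r2 z / E - r1 z \<le> max (r2 z - E * r1 z) 0"
      proof -
        have "r2 z / E - r1 z = (r2 z - E * r1 z) / E" using Epos by (simp add: field_simps)
        also have "\<dots> \<le> max (r2 z - E * r1 z) 0"
        proof (cases "r2 z - E * r1 z \<ge> 0")
          case True
          then have "(r2 z - E * r1 z) / E \<le> r2 z - E * r1 z"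
            using E mult_left_mono[of 1 E "r2 z - E * r1 z"] by (simp add: divide_le_eq)
          then show ?thesis by simp
        next
          case False
          then have "(r2 z - E * r1 z) / E \<le> 0" using Epos by (simp add: divide_le_0_iff)
          then show ?thesis by simp
        qed
        finally show ?thesis .
      qed
      ultimately show ?thesis by linarith
    qed
    have "(\<integral>z. max (g z - r1 z) 0 \<partial>M) \<le> (\<integral>z. max (r2 z - E * r1 z) 0 \<partial>M)"
      using ig i1 i2 gge by (intro integral_mono) auto
    with hB ig g1 gb show ?thesis by (intro exI[of _ g]) auto
  qed
  then obtain g where ig: "integrable M g" and g1: "integral\<^sup>L M g = 1"
    and gb: "\<forall>z. r2 z / E \<le> g z \<and> g z \<le> E * r2 z"
    and gd: "(\<integral>z. max (r1 z - g z) 0 \<partial>M) \<le> \<delta> \<or> (\<integral>z. max (g z - r1 z) 0 \<partial>M) \<le> \<delta>"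
    by blast
  have "(\<integral>z. max (g z - r1 z) 0 \<partial>M) - (\<integral>z. max (r1 z - g z) 0 \<partial>M) = (\<integral>z. g z - r1 z \<partial>M)"
  proof -
    have "(\<integral>z. max (g z - r1 z) 0 \<partial>M) - (\<integral>z. max (r1 z - g z) 0 \<partial>M)
        = (\<integral>z. max (g z - r1 z) 0 - max (r1 z - g z) 0 \<partial>M)"
      using ig i1 by (subst Bochner_Integration.integral_diff) auto
    also have "\<dots> = (\<integral>z. g z - r1 z \<partial>M)"
      by (intro Bochner_Integration.integral_cong) auto
    finally show ?thesis .
  qed
  also have "\<dots> = 0" using ig i1 g1 m1 by (simp add: integral_diff)
  finally have eq: "(\<integral>z. max (g z - r1 z) 0 \<partial>M) = (\<integral>z. max (r1 z - g z) 0 \<partial>M)" by simp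
  show ?thesis using ig g1 gb gd eq by (intro exI[of _ g]) auto
qed


lemma dens_real:
  assumes Q: "prob_space Q" and P: "prob_space P" and s: "sets P = sets Q"
    and ac: "absolutely_continuous Q P"
  shows "integrable Q (\<lambda>z. enn2real (RN_deriv Q P z)) \<and> integral\<^sup>L Q (\<lambda>z. enn2real (RN_deriv Q P z)) = 1
     \<and> (AE z in Q. RN_deriv Q P z = ennreal (enn2real (RN_deriv Q P z)))
     \<and> P = density Q (\<lambda>z. ennreal (enn2real (RN_deriv Q P z)))"
proof -
  interpret Q: prob_space Q by fact
  interpret P: prob_space P by fact
  have sf: "sigma_finite_measure P" by unfold_locales
  have fin: "AE z in Q. RN_deriv Q P z \<noteq> \<infinity>"
    using Q.RN_deriv_finite[OF sf ac s] .
  have ae: "AE z in Q. RN_deriv Q P z = ennreal (enn2real (RN_deriv Q P z))"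
    using fin by eventually_elim (simp add: ennreal_enn2real_if)
  have d: "density Q (RN_deriv Q P) = P" using Q.density_RN_deriv[OF ac s] .
  have d2: "P = density Q (\<lambda>z. ennreal (enn2real (RN_deriv Q P z)))"
    using d density_cong[OF _ _ ae] by simp
  have sp: "space P = space Q" using s by (rule sets_eq_imp_space_eq)
  have "(\<integral>\<^sup>+ z. ennreal (enn2real (RN_deriv Q P z)) \<partial>Q) = emeasure (density Q (\<lambda>z. ennreal (enn2real (RN_deriv Q P z)))) (space Q)"
    by (subst emeasure_density) (auto intro!: nn_integral_cong)
  also have "\<dots> = 1" using d2[symmetric] sp P.emeasure_space_1 by simp
  finally have "(\<integral>\<^sup>+ z. ennreal (enn2real (RN_deriv Q P z)) \<partial>Q) = ennreal 1" by simp
  then have "integrable Q (\<lambda>z. enn2real (RN_deriv Q P z)) \<and> integral\<^sup>L Q (\<lambda>z. enn2real (RN_deriv Q P z)) = 1"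
    by (subst nn_integral_eq_integrable[symmetric]) auto
  with ae d2 show ?thesis by blast
qed

lemma tv_half:
  fixes Q :: "'a measure" and f h :: "'a \<Rightarrow> real"
  assumes [measurable]: "f \<in> borel_measurable Q" "h \<in> borel_measurable Q"
    and i: "integrable Q (\<lambda>z. max (f z - h z) 0)"
    and b: "(\<integral>z. max (f z - h z) 0 \<partial>Q) \<le> \<delta>"
    and hn: "\<And>z. h z \<ge> 0"
    and S[measurable]: "S \<in> sets Q"
  shows "emeasure (density Q (\<lambda>z. ennreal (f z))) S \<le> emeasure (density Q (\<lambda>z. ennreal (h z))) S + ennreal \<delta>"
proof -
  have "emeasure (density Q (\<lambda>z. ennreal (f z))) S = (\<integral>\<^sup>+ z. ennreal (f z) * indicator S z \<partial>Q)"
    by (simp add: emeasure_density)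
  also have "\<dots> \<le> (\<integral>\<^sup>+ z. ennreal (h z) * indicator S z + ennreal (max (f z - h z) 0) \<partial>Q)"
  proof (intro nn_integral_mono)
    fix z
    have "ennreal (f z) \<le> ennreal (h z + max (f z - h z) 0)" by (intro ennreal_leI) simp
    also have "\<dots> = ennreal (h z) + ennreal (max (f z - h z) 0)"
      using hn[of z] by (simp add: ennreal_plus)
    finally show "ennreal (f z) * indicator S z \<le> ennreal (h z) * indicator S z + ennreal (max (f z - h z) 0)"
      by (cases "z \<in> S") auto
  qed
  also have "\<dots> = (\<integral>\<^sup>+ z. ennreal (h z) * indicator S z \<partial>Q) + (\<integral>\<^sup>+ z. ennreal (max (f z - h z) 0) \<partial>Q)"
    by (intro nn_integral_add) auto
  also have "(\<integral>\<^sup>+ z. ennreal (max (f z - h z) 0) \<partial>Q) = ennreal (\<integral>z. max (f z - h z) 0 \<partial>Q)"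
    using i by (intro nn_integral_eq_integral) auto
  also have "\<dots> \<le> ennreal \<delta>" using b by (intro ennreal_leI)
  also have "(\<integral>\<^sup>+ z. ennreal (h z) * indicator S z \<partial>Q) = emeasure (density Q (\<lambda>z. ennreal (h z))) S"
    by (simp add: emeasure_density)
  finally show ?thesis by (simp add: add_left_mono)
qed


theorem mainTheorem13:
  fixes Q P1 P2 :: "'a measure" and \<epsilon> \<delta> :: real
  assumes "prob_space Q" and "prob_space P1" and "prob_space P2"
    and "sets P1 = sets Q" and "sets P2 = sets Q"
    and "absolutely_continuous Q P1" and "absolutely_continuous Q P2"
    and "\<epsilon> \<ge> 0" and "\<delta> \<ge> 0"
    and "(\<integral>\<^sup>+ z. (RN_deriv Q P1 z - ennreal (exp \<epsilon>) * RN_deriv Q P2 z) \<partial>Q) \<le> ennreal \<delta>"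
    and "(\<integral>\<^sup>+ z. (RN_deriv Q P2 z - ennreal (exp \<epsilon>) * RN_deriv Q P1 z) \<partial>Q) \<le> ennreal \<delta>"
  shows "\<exists>P3 :: 'a measure. prob_space P3 \<and> sets P3 = sets Q \<and> absolutely_continuous Q P3 \<and>
           tv_dist P1 P3 \<le> \<delta> \<and>
           (AE z in Q. ennreal (exp (-\<epsilon>)) * RN_deriv Q P2 z \<le> RN_deriv Q P3 z \<and>
                       RN_deriv Q P3 z \<le> ennreal (exp \<epsilon>) * RN_deriv Q P2 z)"
proof -
  interpret Q: prob_space Q by fact
  define E where "E = exp \<epsilon>"
  have E1: "E \<ge> 1" unfolding E_def using assms(8) by simp
  define r1 where "r1 z = enn2real (RN_deriv Q P1 z)" for z
  define r2 where "r2 z = enn2real (RN_deriv Q P2 z)" for z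
  have D1: "integrable Q r1" "integral\<^sup>L Q r1 = 1" "AE z in Q. RN_deriv Q P1 z = ennreal (r1 z)"
     "P1 = density Q (\<lambda>z. ennreal (r1 z))"
    using dens_real[OF assms(1,2,4,6)] unfolding r1_def by auto
  have D2: "integrable Q r2" "integral\<^sup>L Q r2 = 1" "AE z in Q. RN_deriv Q P2 z = ennreal (r2 z)"
     "P2 = density Q (\<lambda>z. ennreal (r2 z))"
    using dens_real[OF assms(1,3,5,7)] unfolding r2_def by auto
  have n1: "\<And>z. r1 z \<ge> 0" and n2: "\<And>z. r2 z \<ge> 0" unfolding r1_def r2_def by auto
  have [measurable]: "r1 \<in> borel_measurable Q" "r2 \<in> borel_measurable Q" unfolding r1_def r2_def by auto
  have conv: "(\<integral>z. max (a z - E * b z) 0 \<partial>Q) \<le> \<delta>"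
    if ia: "integrable Q a" and ib: "integrable Q b" and nb: "\<And>z. b z \<ge> 0"
      and aeA: "AE z in Q. A z = ennreal (a z)" and aeB: "AE z in Q. B z = ennreal (b z)"
      and h: "(\<integral>\<^sup>+ z. (A z - ennreal E * B z) \<partial>Q) \<le> ennreal \<delta>" for a b A B
  proof -
    have "(\<integral>\<^sup>+ z. (A z - ennreal E * B z) \<partial>Q) = (\<integral>\<^sup>+ z. ennreal (max (a z - E * b z) 0) \<partial>Q)"
    proof (intro nn_integral_cong_AE)
      show "AE z in Q. A z - ennreal E * B z = ennreal (max (a z - E * b z) 0)"
        using aeA aeB
      proof eventually_elim
        case (elim z)
        have "ennreal E * ennreal (b z) = ennreal (E * b z)" using E1 nb[of z] by (simp add: ennreal_mult)
        then show ?case using elim E1 nb[of z]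
          by (simp add: ennreal_minus ennreal_max_0)
      qed
    qed
    also have "\<dots> = ennreal (\<integral>z. max (a z - E * b z) 0 \<partial>Q)"
      using ia ib by (intro nn_integral_eq_integral) auto
    finally show ?thesis using h assms(9) by (simp add: ennreal_le_iff)
  qed
  have hA: "(\<integral>z. max (r1 z - E * r2 z) 0 \<partial>Q) \<le> \<delta>"
    using conv[OF D1(1) D2(1) n2 D1(3) D2(3)] assms(10) unfolding E_def by simp
  have hB: "(\<integral>z. max (r2 z - E * r1 z) 0 \<partial>Q) \<le> \<delta>"
    using conv[OF D2(1) D1(1) n1 D2(3) D1(3)] assms(11) unfolding E_def by simp
  obtain g where ig: "integrable Q g" and g1: "integral\<^sup>L Q g = 1"
    and gb: "\<forall>z. r2 z / E \<le> g z \<and> g z \<le> E * r2 z"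
    and t1: "(\<integral>z. max (r1 z - g z) 0 \<partial>Q) \<le> \<delta>" and t2: "(\<integral>z. max (g z - r1 z) 0 \<partial>Q) \<le> \<delta>"
    using core[OF E1 D1(1) D2(1) n1 n2 D1(2) D2(2) hA hB] by blast
  have gn: "\<And>z. g z \<ge> 0" using gb n2 E1
    by (meson divide_nonneg_nonneg dual_order.trans le_numeral_extra(1) order.trans)
  have [measurable]: "g \<in> borel_measurable Q" using ig by auto
  define P3 where "P3 = density Q (\<lambda>z. ennreal (g z))"
  have sP3: "sets P3 = sets Q" unfolding P3_def by simp
  have spP3: "space P3 = space Q" unfolding P3_def by simp
  have "emeasure P3 (space P3) = (\<integral>\<^sup>+ z. ennreal (g z) \<partial>Q)"
    unfolding P3_def by (subst emeasure_density) (auto intro!: nn_integral_cong)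
  also have "\<dots> = ennreal (integral\<^sup>L Q g)" using ig gn by (intro nn_integral_eq_integral) auto
  finally have "emeasure P3 (space P3) = 1" using g1 by simp
  then have pP3: "prob_space P3" by (rule prob_spaceI)
  interpret P3: prob_space P3 by fact
  interpret P1: prob_space P1 by fact
  have acP3: "absolutely_continuous Q P3" unfolding P3_def by (rule absolutely_continuousI_density) simp
  have ae3: "AE z in Q. ennreal (g z) = RN_deriv Q P3 z"
    unfolding P3_def by (rule Q.RN_deriv_unique) auto
  have AE: "AE z in Q. ennreal (exp (-\<epsilon>)) * RN_deriv Q P2 z \<le> RN_deriv Q P3 z \<and>
                       RN_deriv Q P3 z \<le> ennreal (exp \<epsilon>) * RN_deriv Q P2 z"
    using ae3 D2(3)
  proof eventually_elim
    case (elim z)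
    have "ennreal (exp (-\<epsilon>)) * ennreal (r2 z) = ennreal (r2 z / E)"
      using n2[of z] by (simp add: ennreal_mult[symmetric] E_def exp_minus divide_inverse mult.commute)
    moreover have "ennreal (exp \<epsilon>) * ennreal (r2 z) = ennreal (E * r2 z)"
      using n2[of z] by (simp add: ennreal_mult[symmetric] E_def)
    moreover have "ennreal (r2 z / E) \<le> ennreal (g z)" "ennreal (g z) \<le> ennreal (E * r2 z)"
      using gb by (auto intro!: ennreal_leI)
    ultimately show ?case using elim by simp
  qed
  have tv: "tv_dist P1 P3 \<le> \<delta>"
    unfolding tv_dist_def
  proof (rule cSUP_least)
    show "sets P1 \<noteq> {}" by auto
  next
    fix S assume S: "S \<in> sets P1"
    then have SQ: "S \<in> sets Q" using assms(4) by simp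
    have a: "emeasure P1 S \<le> emeasure P3 S + ennreal \<delta>"
      unfolding P3_def
      using tv_half[OF _ _ _ t1 gn SQ] ig D1(1) by (subst D1(4)) auto
    have b: "emeasure P3 S \<le> emeasure P1 S + ennreal \<delta>"
      unfolding P3_def
      using tv_half[OF _ _ _ t2 n1 SQ] ig D1(1) by (subst D1(4)) auto
    have a': "measure P1 S \<le> measure P3 S + \<delta>"
      using a assms(9) by (simp add: P1.emeasure_eq_measure P3.emeasure_eq_measure ennreal_plus[symmetric] del: ennreal_plus)
    have b': "measure P3 S \<le> measure P1 S + \<delta>"
      using b assms(9) by (simp add: P1.emeasure_eq_measure P3.emeasure_eq_measure ennreal_plus[symmetric] del: ennreal_plus)
    show "\<bar>measure P1 S - measure P3 S\<bar> \<le> \<delta>" using a' b' by linarith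
  qed
  show ?thesis using pP3 sP3 acP3 tv AE by blast
qed

end
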